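(* Let $(X,d,\mu)$ be as in the context, $1\le p<\infty$, $x\in X$, assume $\mu$ is doubling at $x$, and fix $0<R_0<\infty$. (i) If $0<q\in\underline{S}_0(x)$, then for $0<2r\le R\le R_0$: $\operatorname{cap}_p(B_r,B_R)\lesssim R^{q-p}$ if $q<p$, and $\operatorname{cap}_p(B_r,B_R)\lesssim r^{q-p}$ if $q>p$. (ii) If $X$ is unbounded and $0<q\in\overline{S}_\infty$, then the same two estimates hold for $R_0\le r\le R/2<\infty$. (iii) If $p\in\underline{S}_0(x)$, then $\operatorname{cap}_p(B_r,B_R)\lesssim\big(\log\frac Rr\big)^{1-p}$ for $0<2r\le R\le R_0$. (iv) If $X$ is unbounded and $p\in\overline{S}_\infty$, then the estimate in (iii) holds for $R_0\le r\le R/2<\infty$. Implicit constants are independent of $r,R$ (but may depend on $R_0$).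
   Context: $(X,d,\mu)$ metric space with positive complete Borel measure, $0<\mu(B)<\infty$ for all balls; $B_r=B(x,r)$. Doubling at $x$: $\mu(B(x,2r))\le C\mu(B(x,r))$ for all $r>0$. $\operatorname{cap}_p(E,\Omega)=\inf\{\int_\Omega g_u^p\,d\mu:u\in N^{1,p}_0(\Omega),u\ge1\text{ on }E\}$ with $N^{1,p}_0(\Omega)=\{f|_\Omega:f\in N^{1,p}(X),f=0 \text{ off }\Omega\}$, $N^{1,p}$ the Newtonian space defined via upper gradients and $g_u$ the minimal $p$-weak upper gradient. $\underline{S}_0(x)=\{q>0:\exists C_q,\ \mu(B_r)\le C_qr^q\text{ for }0<r\le1\}$; $\overline{S}_\infty=\overline{S}_\infty(x)=\{q>0:\exists C_q,\ \mu(B_r)\le C_qr^q\text{ for }r\ge1\}$ (independent of $x$). *)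

theory Defs
  imports "HOL-Analysis.Analysis"
begin

definition mms :: "'a::metric_space measure \<Rightarrow> bool" where
  "mms \<mu> \<longleftrightarrow> space \<mu> = UNIV \<and> sets borel \<subseteq> sets \<mu> \<and> complete_measure \<mu> \<and>
     (\<forall>x r. 0 < r \<longrightarrow> 0 < emeasure \<mu> (ball x r) \<and> emeasure \<mu> (ball x r) < \<infinity>)"

definition epow :: "ennreal \<Rightarrow> real \<Rightarrow> ennreal" where
  "epow a p = (if a = top then top else ennreal (enn2real a powr p))"

definition curve_variation :: "(real \<Rightarrow> 'a::metric_space) \<Rightarrow> real \<Rightarrow> real \<Rightarrow> ennreal" where
  "curve_variation \<gamma> a b =
     (SUP ts \<in> {ts. sorted ts \<and> set ts \<subseteq> {a..b}}.
        ennreal (\<Sum>i<length ts - 1. dist (\<gamma> (ts ! i)) (\<gamma> (ts ! Suc i))))"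

definition arclength_curve :: "(real \<Rightarrow> 'a::metric_space) \<Rightarrow> real \<Rightarrow> bool" where
  "arclength_curve \<gamma> l \<longleftrightarrow> 0 \<le> l \<and>
     (\<forall>s t. 0 \<le> s \<longrightarrow> s \<le> t \<longrightarrow> t \<le> l \<longrightarrow> curve_variation \<gamma> s t = ennreal (t - s))"

definition line_integral :: "('a \<Rightarrow> ennreal) \<Rightarrow> (real \<Rightarrow> 'a) \<Rightarrow> real \<Rightarrow> ennreal" where
  "line_integral g \<gamma> l = (\<integral>\<^sup>+ t. g (\<gamma> t) * indicator {0..l} t \<partial>lborel)"

definition modulus :: "'a::metric_space measure \<Rightarrow> real \<Rightarrow> ((real \<Rightarrow> 'a) \<times> real) set \<Rightarrow> ennreal" where
  "modulus \<mu> p \<Gamma> = (INF \<rho> \<in> {\<rho>. \<rho> \<in> borel_measurable borel \<and>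
        (\<forall>(\<gamma>, l) \<in> \<Gamma>. 1 \<le> line_integral \<rho> \<gamma> l)}. \<integral>\<^sup>+ x. epow (\<rho> x) p \<partial>\<mu>)"

definition p_weak_upper_gradient ::
  "'a::metric_space measure \<Rightarrow> real \<Rightarrow> ('a \<Rightarrow> real) \<Rightarrow> ('a \<Rightarrow> ennreal) \<Rightarrow> bool" where
  "p_weak_upper_gradient \<mu> p u g \<longleftrightarrow> g \<in> borel_measurable borel \<and>
     modulus \<mu> p {(\<gamma>, l). arclength_curve \<gamma> l \<and>
        \<not> ennreal \<bar>u (\<gamma> 0) - u (\<gamma> l)\<bar> \<le> line_integral g \<gamma> l} = 0"

definition newtonian :: "'a::metric_space measure \<Rightarrow> real \<Rightarrow> ('a \<Rightarrow> real) \<Rightarrow> bool" where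
  "newtonian \<mu> p u \<longleftrightarrow> u \<in> borel_measurable \<mu> \<and>
     (\<integral>\<^sup>+ x. ennreal (\<bar>u x\<bar> powr p) \<partial>\<mu>) < \<infinity> \<and>
     (\<exists>g. p_weak_upper_gradient \<mu> p u g \<and> (\<integral>\<^sup>+ x. epow (g x) p \<partial>\<mu>) < \<infinity>)"

text \<open>Functions u in N^{1,p}_0(Omega) are
  represented by their extensions in N^{1,p}(X) vanishing off Omega; the integral of
  g_u^p over Omega equals the infimum over p-weak upper gradients g of u.\<close>
definition cap :: "'a::metric_space measure \<Rightarrow> real \<Rightarrow> 'a set \<Rightarrow> 'a set \<Rightarrow> ennreal" where
  "cap \<mu> p E \<Omega> = (INF ug \<in> {(u, g). newtonian \<mu> p u \<and> (\<forall>y. y \<notin> \<Omega> \<longrightarrow> u y = 0) \<and>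
        (\<forall>y\<in>E. 1 \<le> u y) \<and> p_weak_upper_gradient \<mu> p u g}.
      \<integral>\<^sup>+ y. epow (snd ug y) p * indicator \<Omega> y \<partial>\<mu>)"

definition doubling_at :: "'a::metric_space measure \<Rightarrow> 'a \<Rightarrow> bool" where
  "doubling_at \<mu> x \<longleftrightarrow> (\<exists>C. \<forall>r>0. measure \<mu> (ball x (2 * r)) \<le> C * measure \<mu> (ball x r))"

definition lower_S0 :: "'a::metric_space measure \<Rightarrow> 'a \<Rightarrow> real set" where
  "lower_S0 \<mu> x = {q. 0 < q \<and> (\<exists>C. \<forall>r. 0 < r \<and> r \<le> 1 \<longrightarrow> measure \<mu> (ball x r) \<le> C * r powr q)}"

definition upper_Sinf :: "'a::metric_space measure \<Rightarrow> 'a \<Rightarrow> real set" where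
  "upper_Sinf \<mu> x = {q. 0 < q \<and> (\<exists>C. \<forall>r. 1 \<le> r \<longrightarrow> measure \<mu> (ball x r) \<le> C * r powr q)}"

end

theory Submission
  imports Defs
begin

lemma exit_time:
  fixes h \<phi> :: "real \<Rightarrow> real"
  assumes hl: "\<And>s t. \<bar>h s - h t\<bar> \<le> \<bar>s - t\<bar>"
    and pl: "\<And>z z'. \<bar>\<phi> z - \<phi> z'\<bar> \<le> L * \<bar>z - z'\<bar>" and L: "0 \<le> L"
    and pc: "\<And>z. a \<le> z \<Longrightarrow> \<phi> z = cc" and l: "0 \<le> l"
  shows "\<bar>\<phi> (h 0) - \<phi> (h l)\<bar> \<le> L * measure lborel ({0..l} \<inter> {t. h t < a})"
proof -
  have cont: "continuous_on UNIV h"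
    by (rule lipschitz_on_continuous_on[of 1], rule lipschitz_onI) (use hl in \<open>auto simp: dist_real_def\<close>)
  define I where "I = {0..l} \<inter> {t. h t < a}"
  have "open {t. h t < a}" by (rule open_Collect_less[OF cont]) auto
  hence Iset: "I \<in> sets lborel" unfolding I_def by auto
  have Ifm: "I \<in> fmeasurable lborel"
    by (rule fmeasurableI2[of "{0..l}"]) (use Iset in \<open>auto simp: I_def fmeasurable_def emeasure_lborel_Icc l\<close>)
  define T where "T = {0..l} \<inter> {t. a \<le> h t}"
  show ?thesis
  proof (cases "T = {}")
    case True
    hence "I = {0..l}" unfolding I_def T_def by auto
    hence mI: "measure lborel I = l" using l by simp
    have "\<bar>\<phi> (h 0) - \<phi> (h l)\<bar> \<le> L * \<bar>h 0 - h l\<bar>" by (rule pl)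
    also have "\<dots> \<le> L * l" using hl[of 0 l] l L by (auto intro: mult_left_mono)
    finally show ?thesis using mI unfolding I_def by simp
  next
    case False
    have "closed {t. a \<le> h t}" by (rule closed_Collect_le) (auto intro: cont)
    hence clT: "closed T" unfolding T_def by auto
    have bb: "bdd_below T" "bdd_above T" unfolding T_def by (auto intro!: bdd_belowI bdd_aboveI)
    define t1 where "t1 = Inf T"
    define t2 where "t2 = Sup T"
    have t1T: "t1 \<in> T" unfolding t1_def by (rule closed_contains_Inf[OF False bb(1) clT])
    have t2T: "t2 \<in> T" unfolding t2_def by (rule closed_contains_Sup[OF False bb(2) clT])
    have t12: "t1 \<le> t2" unfolding t1_def using t2T bb by (auto intro: cInf_lower)
    have s1: "{0..<t1} \<subseteq> I"
    proof
      fix t assume t: "t \<in> {0..<t1}"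
      have "t1 \<le> l" using t1T T_def by auto
      show "t \<in> I"
      proof (rule ccontr)
        assume "t \<notin> I"
        hence "t \<in> T" using t \<open>t1 \<le> l\<close> unfolding I_def T_def by auto
        hence "t1 \<le> t" unfolding t1_def using bb by (auto intro: cInf_lower)
        thus False using t by auto
      qed
    qed
    have s2: "{t2<..l} \<subseteq> I"
    proof
      fix t assume t: "t \<in> {t2<..l}"
      have "0 \<le> t2" using t2T T_def by auto
      show "t \<in> I"
      proof (rule ccontr)
        assume "t \<notin> I"
        hence "t \<in> T" using t \<open>0 \<le> t2\<close> unfolding I_def T_def by auto
        hence "t \<le> t2" unfolding t2_def using bb by (auto intro: cSup_upper)
        thus False using t by auto
      qed
    qed
    have "t1 + (l - t2) = measure lborel ({0..<t1} \<union> {t2<..l})"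
      using t1T t2T t12 unfolding T_def
      by (subst measure_Union) auto
    also have "\<dots> \<le> measure lborel I"
      by (rule measure_mono_fmeasurable[OF _ _ Ifm]) (use s1 s2 in auto)
    finally have mI: "t1 + (l - t2) \<le> measure lborel I" .
    have e1: "\<phi> (h t1) = cc" "\<phi> (h t2) = cc" using t1T t2T pc unfolding T_def by auto
    have "\<bar>\<phi> (h 0) - \<phi> (h l)\<bar> \<le> \<bar>\<phi> (h 0) - \<phi> (h t1)\<bar> + \<bar>\<phi> (h t2) - \<phi> (h l)\<bar>"
      using e1 by simp
    also have "\<dots> \<le> L * \<bar>h 0 - h t1\<bar> + L * \<bar>h t2 - h l\<bar>" by (intro add_mono pl)
    also have "\<dots> \<le> L * t1 + L * (l - t2)"
      using hl[of 0 t1] hl[of t2 l] t1T t2T L unfolding T_def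
      by (intro add_mono mult_left_mono) auto
    also have "\<dots> \<le> L * measure lborel I" using mI L
      by (metis distrib_left mult_left_mono)
    finally show ?thesis unfolding I_def .
  qed
qed

lemma arclength_lip:
  assumes "arclength_curve \<gamma> l" "0 \<le> s" "s \<le> l" "0 \<le> t" "t \<le> l"
  shows "dist (\<gamma> s) (\<gamma> t) \<le> \<bar>s - t\<bar>"
proof -
  have *: "dist (\<gamma> s) (\<gamma> t) \<le> t - s" if "0 \<le> s" "s \<le> t" "t \<le> l" for s t
  proof -
    have "ennreal (\<Sum>i<length [s,t] - 1. dist (\<gamma> ([s,t] ! i)) (\<gamma> ([s,t] ! Suc i)))
        \<le> curve_variation \<gamma> s t"
      unfolding curve_variation_def
      by (rule SUP_upper) (use that in auto)
    also have "\<dots> = ennreal (t - s)" using assms(1) that unfolding arclength_curve_def by auto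
    finally show ?thesis using that by (simp add: ennreal_le_iff)
  qed
  show ?thesis
  proof (cases "s \<le> t")
    case True thus ?thesis using *[of s t] assms by auto
  next
    case False thus ?thesis using *[of t s] assms by (auto simp: dist_commute)
  qed
qed

definition clampf :: "real \<Rightarrow> real" where "clampf z = max 0 (min 1 z)"

lemma clampf_lip: "\<bar>clampf ((a - z) / b) - clampf ((a - z') / b)\<bar> \<le> (1 / b) * \<bar>z - z'\<bar>" if "0 < b"
proof -
  have "\<bar>clampf ((a - z) / b) - clampf ((a - z') / b)\<bar> \<le> \<bar>(a - z) / b - (a - z') / b\<bar>"
    unfolding clampf_def by (auto simp: max_def min_def abs_if)
  moreover have "(a - z) / b - (a - z') / b = (z' - z) / b" using that by (simp add: field_simps)
  moreover have "\<bar>(z' - z) / b\<bar> = (1 / b) * \<bar>z - z'\<bar>" using that by (simp add: abs_div abs_minus_commute)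
  ultimately show ?thesis by simp
qed

lemma clampf_bounds: "0 \<le> clampf z" "clampf z \<le> 1" unfolding clampf_def by auto

lemma upper_grad_curve:
  fixes x :: "'a::metric_space"
  assumes pars: "\<And>k. k < n \<Longrightarrow> 0 < b k \<and> 0 \<le> w k"
    and ac: "arclength_curve \<gamma> l"
  shows "ennreal \<bar>(\<Sum>k<n. w k * clampf ((a k - dist x (\<gamma> 0)) / b k)) -
                  (\<Sum>k<n. w k * clampf ((a k - dist x (\<gamma> l)) / b k))\<bar>
     \<le> line_integral (\<lambda>y. ennreal (\<Sum>k<n. (w k / b k) * indicator (ball x (a k)) y)) \<gamma> l"
proof -
  have l: "0 \<le> l" using ac unfolding arclength_curve_def by auto
  have wb: "0 \<le> w k / b k" if "k < n" for k using pars[OF that] by simp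
  define cl where "cl t = max 0 (min l t)" for t
  define h where "h t = dist x (\<gamma> (cl t))" for t
  have cl: "0 \<le> cl t" "cl t \<le> l" "\<bar>cl s - cl t\<bar> \<le> \<bar>s - t\<bar>" for s t
    using l unfolding cl_def by (auto simp: max_def min_def abs_if)
  have hl: "\<bar>h s - h t\<bar> \<le> \<bar>s - t\<bar>" for s t
  proof -
    have "\<bar>h s - h t\<bar> \<le> dist (\<gamma> (cl s)) (\<gamma> (cl t))"
      unfolding h_def using dist_triangle[of x "\<gamma> (cl s)" "\<gamma> (cl t)"] dist_triangle[of x "\<gamma> (cl t)" "\<gamma> (cl s)"]
      by (simp add: dist_commute abs_le_iff)
    also have "\<dots> \<le> \<bar>cl s - cl t\<bar>" by (rule arclength_lip[OF ac]) (use cl in auto)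
    also have "\<dots> \<le> \<bar>s - t\<bar>" by (rule cl)
    finally show ?thesis .
  qed
  have h0: "h 0 = dist x (\<gamma> 0)" and hL: "h l = dist x (\<gamma> l)"
    using l unfolding h_def cl_def by auto
  have cont: "continuous_on UNIV h"
    by (rule lipschitz_on_continuous_on[of 1], rule lipschitz_onI) (use hl in \<open>auto simp: dist_real_def\<close>)
  define S where "S k = {0..l} \<inter> {t. h t < a k}" for k
  have Sset: "S k \<in> sets lborel" for k
  proof -
    have "open {t. h t < a k}" by (rule open_Collect_less[OF cont]) auto
    thus ?thesis unfolding S_def by auto
  qed
  have Sfin: "emeasure lborel (S k) \<noteq> top" for k
  proof -
    have "emeasure lborel (S k) \<le> emeasure lborel {0..l}"
      by (rule emeasure_mono) (auto simp: S_def)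
    thus ?thesis using l by (auto simp: top_unique)
  qed
  have each: "\<bar>clampf ((a k - h 0) / b k) - clampf ((a k - h l) / b k)\<bar> \<le> (1 / b k) * measure lborel (S k)"
    if "k < n" for k
    unfolding S_def
    by (rule exit_time[OF hl, where cc = 0]) (use pars[OF that] clampf_lip l in \<open>auto simp: clampf_def divide_nonpos_pos\<close>)
  have "\<bar>(\<Sum>k<n. w k * clampf ((a k - h 0) / b k)) - (\<Sum>k<n. w k * clampf ((a k - h l) / b k))\<bar>
     = \<bar>\<Sum>k<n. w k * (clampf ((a k - h 0) / b k) - clampf ((a k - h l) / b k))\<bar>"
    by (simp add: sum_subtractf right_diff_distrib)
  also have "\<dots> \<le> (\<Sum>k<n. \<bar>w k * (clampf ((a k - h 0) / b k) - clampf ((a k - h l) / b k))\<bar>)"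
    by (rule sum_abs)
  also have "\<dots> \<le> (\<Sum>k<n. (w k / b k) * measure lborel (S k))"
  proof (rule sum_mono)
    fix k assume "k \<in> {..<n}"
    hence k: "k < n" by auto
    have "\<bar>w k * (clampf ((a k - h 0) / b k) - clampf ((a k - h l) / b k))\<bar>
       = w k * \<bar>clampf ((a k - h 0) / b k) - clampf ((a k - h l) / b k)\<bar>"
      using pars[OF k] by (simp add: abs_mult)
    also have "\<dots> \<le> w k * ((1 / b k) * measure lborel (S k))"
      by (rule mult_left_mono[OF each[OF k]]) (use pars[OF k] in auto)
    finally show "\<bar>w k * (clampf ((a k - h 0) / b k) - clampf ((a k - h l) / b k))\<bar>
       \<le> (w k / b k) * measure lborel (S k)" by simp
  qed
  finally have real_ineq: "\<bar>(\<Sum>k<n. w k * clampf ((a k - h 0) / b k)) - (\<Sum>k<n. w k * clampf ((a k - h l) / b k))\<bar>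
      \<le> (\<Sum>k<n. (w k / b k) * measure lborel (S k))" .
  have pw: "ennreal (\<Sum>k<n. (w k / b k) * indicator (ball x (a k)) (\<gamma> t)) * indicator {0..l} t
      = (\<Sum>k<n. ennreal (w k / b k) * indicator (S k) t)" for t
  proof (cases "t \<in> {0..l}")
    case True
    hence "cl t = t" unfolding cl_def by auto
    hence "\<gamma> t \<in> ball x (a k) \<longleftrightarrow> t \<in> S k" for k using True unfolding S_def h_def by auto
    hence "ennreal (\<Sum>k<n. (w k / b k) * indicator (ball x (a k)) (\<gamma> t))
        = ennreal (\<Sum>k<n. (w k / b k) * indicator (S k) t)"
      by (simp add: indicator_def)
    also have "\<dots> = (\<Sum>k<n. ennreal ((w k / b k) * indicator (S k) t))"
      by (rule sum_ennreal[symmetric]) (use wb in \<open>auto simp: indicator_def\<close>)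
    also have "\<dots> = (\<Sum>k<n. ennreal (w k / b k) * indicator (S k) t)"
      by (rule sum.cong) (auto simp: indicator_def)
    finally show ?thesis using True by simp
  next
    case False
    hence "indicator (S k) t = (0::ennreal)" for k by (auto simp: S_def indicator_def)
    thus ?thesis using False by simp
  qed
  have "line_integral (\<lambda>y. ennreal (\<Sum>k<n. (w k / b k) * indicator (ball x (a k)) y)) \<gamma> l
      = (\<integral>\<^sup>+ t. (\<Sum>k<n. ennreal (w k / b k) * indicator (S k) t) \<partial>lborel)"
    unfolding line_integral_def by (rule nn_integral_cong) (rule pw)
  also have "\<dots> = (\<Sum>k<n. \<integral>\<^sup>+ t. ennreal (w k / b k) * indicator (S k) t \<partial>lborel)"
    by (rule nn_integral_sum) (use Sset in auto)
  also have "\<dots> = (\<Sum>k<n. ennreal (w k / b k) * emeasure lborel (S k))"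
    by (rule sum.cong) (use Sset in \<open>auto intro: nn_integral_cmult_indicator\<close>)
  also have "\<dots> = (\<Sum>k<n. ennreal ((w k / b k) * measure lborel (S k)))"
  proof (rule sum.cong)
    fix k assume "k \<in> {..<n}"
    thus "ennreal (w k / b k) * emeasure lborel (S k) = ennreal ((w k / b k) * measure lborel (S k))"
    proof -
      have "ennreal ((w k / b k) * measure lborel (S k)) = ennreal (w k / b k) * ennreal (measure lborel (S k))"
        by (rule ennreal_mult) (use wb \<open>k \<in> {..<n}\<close> in auto)
      thus ?thesis using Sfin[of k] by (simp add: emeasure_eq_ennreal_measure)
    qed
  qed simp
  also have "\<dots> = ennreal (\<Sum>k<n. (w k / b k) * measure lborel (S k))"
    by (rule sum_ennreal) (use wb in \<open>auto intro!: mult_nonneg_nonneg simp del: times_divide_eq_left\<close>)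
  finally have li: "line_integral (\<lambda>y. ennreal (\<Sum>k<n. (w k / b k) * indicator (ball x (a k)) y)) \<gamma> l
      = ennreal (\<Sum>k<n. (w k / b k) * measure lborel (S k))" .
  show ?thesis unfolding li using real_ineq h0 hL by (simp add: ennreal_leI)
qed

lemma cap_generic:
  fixes \<mu> :: "'a::metric_space measure" and x :: 'a
  assumes mms: "mms \<mu>" and p: "1 \<le> p" and ws: "(\<Sum>k<n. w k) = 1"
    and pars: "\<And>k. k < n \<Longrightarrow> 0 < b k \<and> 0 \<le> w k \<and> r \<le> a k - b k \<and> a k \<le> R"
  shows "cap \<mu> p (ball x r) (ball x R)
     \<le> (\<integral>\<^sup>+y. ennreal ((\<Sum>k<n. (w k / b k) * indicator (ball x (a k)) y) powr p) \<partial>\<mu>)"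
proof -
  define u where "u y = (\<Sum>k<n. w k * clampf ((a k - dist x y) / b k))" for y
  define G where "G y = (\<Sum>k<n. (w k / b k) * indicator (ball x (a k)) y)" for y
  define g where "g y = ennreal (G y)" for y
  have sp: "space \<mu> = UNIV" and sb: "sets borel \<subseteq> sets \<mu>"
    and bfin: "\<And>c. 0 < c \<Longrightarrow> emeasure \<mu> (ball x c) < \<infinity>"
    using mms unfolding mms_def by auto
  have ballm: "ball y c \<in> sets \<mu>" for y c using sb by auto
  have wb: "0 \<le> w k / b k" if "k < n" for k using pars[OF that] by simp
  have Gnn: "0 \<le> G y" for y unfolding G_def using wb
    by (auto intro!: sum_nonneg mult_nonneg_nonneg simp del: times_divide_eq_left)
  define M where "M = (\<Sum>k<n. w k / b k)"
  have GM: "G y \<le> M" for y unfolding G_def M_def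
    by (rule sum_mono) (use wb in \<open>auto simp: indicator_def\<close>)
  have G0: "G y = 0" if "y \<notin> ball x R" for y
    unfolding G_def using that pars by (auto intro!: sum.neutral simp: indicator_def) (smt (verit))
  have ep: "epow (g y) p = ennreal (G y powr p)" for y
    unfolding epow_def g_def using Gnn[of y] by simp
  have ballb[measurable]: "ball x c \<in> sets borel" for c by simp
  have gm: "g \<in> borel_measurable borel" unfolding g_def G_def by measurable
  have ug: "p_weak_upper_gradient \<mu> p u g"
  proof -
    have empty: "{(\<gamma>, l). arclength_curve \<gamma> l \<and> \<not> ennreal \<bar>u (\<gamma> 0) - u (\<gamma> l)\<bar> \<le> line_integral g \<gamma> l} = {}"
      using upper_grad_curve[of n b w, OF _ , where x = x and a = a] pars
      unfolding u_def g_def G_def by fastforce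
    have "modulus \<mu> p {} \<le> (\<integral>\<^sup>+ y. epow ((\<lambda>_. 0) y) p \<partial>\<mu>)"
      unfolding modulus_def by (rule INF_lower) auto
    also have "\<dots> = 0" by (simp add: epow_def)
    finally have "modulus \<mu> p {} = 0" by simp
    thus ?thesis unfolding p_weak_upper_gradient_def using gm by (simp only: empty)
  qed
  have u0: "u y = 0" if "y \<notin> ball x R" for y
  proof -
    have "clampf ((a k - dist x y) / b k) = 0" if "k < n" for k
      using pars[OF that] \<open>y \<notin> ball x R\<close> by (auto simp: clampf_def divide_nonpos_pos)
    thus ?thesis unfolding u_def by simp
  qed
  have u1: "1 \<le> u y" if "y \<in> ball x r" for y
  proof -
    have "clampf ((a k - dist x y) / b k) = 1" if "k < n" for k
      using pars[OF that] \<open>y \<in> ball x r\<close> by (auto simp: clampf_def le_divide_eq)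
    thus ?thesis unfolding u_def using ws by simp
  qed
  have ub: "0 \<le> u y" "u y \<le> 1" for y
  proof -
    show "0 \<le> u y" unfolding u_def using pars by (auto intro!: sum_nonneg simp: clampf_bounds)
    have "u y \<le> (\<Sum>k<n. w k * 1)" unfolding u_def
      by (rule sum_mono, rule mult_left_mono) (use pars clampf_bounds in auto)
    thus "u y \<le> 1" using ws by simp
  qed
  have um: "u \<in> borel_measurable \<mu>"
  proof (rule borel_measurable_subalgebra[OF sb])
    show "space borel = space \<mu>" using sp by simp
    show "u \<in> borel_measurable borel" unfolding u_def clampf_def
      by (intro borel_measurable_continuous_onI continuous_intros) (use pars in force)
  qed
  have "(\<integral>\<^sup>+ y. ennreal (\<bar>u y\<bar> powr p) \<partial>\<mu>) \<le> (\<integral>\<^sup>+ y. indicator (ball x R) y \<partial>\<mu>)"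
  proof (rule nn_integral_mono)
    fix y show "ennreal (\<bar>u y\<bar> powr p) \<le> indicator (ball x R) y"
    proof (cases "y \<in> ball x R")
      case True
      have "\<bar>u y\<bar> powr p \<le> 1 powr p" using ub[of y] p by (intro powr_mono2) auto
      hence "\<bar>u y\<bar> powr p \<le> 1" by simp
      thus ?thesis using True by simp
    next
      case False thus ?thesis using u0 by simp
    qed
  qed
  also have "\<dots> = emeasure \<mu> (ball x R)" using ballm by simp
  also have "\<dots> < \<infinity>"
  proof (cases "0 < R")
    case True thus ?thesis using bfin by simp
  next
    case False thus ?thesis by (simp add: ball_empty not_less)
  qed
  finally have ufin: "(\<integral>\<^sup>+ y. ennreal (\<bar>u y\<bar> powr p) \<partial>\<mu>) < \<infinity>" .
  have gint: "(\<integral>\<^sup>+ y. epow (g y) p \<partial>\<mu>) \<le> (\<integral>\<^sup>+ y. ennreal (M powr p) * indicator (ball x R) y \<partial>\<mu>)"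
  proof (rule nn_integral_mono)
    fix y show "epow (g y) p \<le> ennreal (M powr p) * indicator (ball x R) y"
    proof (cases "y \<in> ball x R")
      case True
      have "G y powr p \<le> M powr p" using Gnn GM p by (intro powr_mono2) auto
      thus ?thesis using True ep by (simp add: ennreal_leI)
    next
      case False thus ?thesis using G0 ep by simp
    qed
  qed
  also have "\<dots> = ennreal (M powr p) * emeasure \<mu> (ball x R)"
    using ballm by (simp add: nn_integral_cmult_indicator)
  also have "\<dots> < \<infinity>"
  proof (cases "0 < R")
    case True thus ?thesis using bfin by (simp add: ennreal_mult_less_top)
  next
    case False thus ?thesis by (simp add: ball_empty not_less)
  qed
  finally have gfin: "(\<integral>\<^sup>+ y. epow (g y) p \<partial>\<mu>) < \<infinity>" .
  have newt: "newtonian \<mu> p u" unfolding newtonian_def using um ufin ug gfin by blast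
  have "cap \<mu> p (ball x r) (ball x R) \<le> (\<integral>\<^sup>+ y. epow (snd (u, g) y) p * indicator (ball x R) y \<partial>\<mu>)"
    unfolding cap_def by (rule INF_lower) (use newt u0 u1 ug in auto)
  also have "\<dots> \<le> (\<integral>\<^sup>+ y. ennreal (G y powr p) \<partial>\<mu>)"
    by (rule nn_integral_mono) (auto simp: ep indicator_def)
  finally show ?thesis unfolding G_def .
qed

lemma cap_single:
  fixes \<mu> :: "'a::metric_space measure" and x :: 'a
  assumes mms: "mms \<mu>" and p: "1 \<le> p" and b: "0 < b" "r \<le> a - b" "a \<le> R"
  shows "cap \<mu> p (ball x r) (ball x R) \<le> ennreal ((1 / b) powr p) * emeasure \<mu> (ball x a)"
proof -
  have sb: "sets borel \<subseteq> sets \<mu>" using mms unfolding mms_def by auto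
  have ballm: "ball y c \<in> sets \<mu>" for y c using sb by auto
  have "cap \<mu> p (ball x r) (ball x R)
     \<le> (\<integral>\<^sup>+y. ennreal ((\<Sum>k<(1::nat). (1 / b) * indicator (ball x a) y) powr p) \<partial>\<mu>)"
    by (rule cap_generic[OF mms p, where n="1::nat" and w="\<lambda>_. 1" and b="\<lambda>_. b" and r=r and a="\<lambda>_. a" and R=R and x=x]) (use b in \<open>auto simp: card_lessThan\<close>)
  also have "\<dots> = (\<integral>\<^sup>+y. ennreal ((1 / b) powr p) * indicator (ball x a) y \<partial>\<mu>)"
    by (rule nn_integral_cong) (auto simp: indicator_def)
  also have "\<dots> = ennreal ((1 / b) powr p) * emeasure \<mu> (ball x a)"
    using ballm by (simp add: nn_integral_cmult_indicator)
  finally show ?thesis .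
qed

lemma geom_half: "j \<le> n \<Longrightarrow> (\<Sum>k\<in>{j..<n}. (1/2::real)^k) = 2 * (1/2)^j - 2 * (1/2)^n"
proof (induction n rule: dec_induct)
  case base thus ?case by simp
next
  case (step n) thus ?case by simp
qed

lemma cap_dyadic:
  fixes \<mu> :: "'a::metric_space measure" and x :: 'a
  assumes mms: "mms \<mu>" and p: "1 \<le> p" and n: "1 \<le> n" and r: "0 < r" and R: "2 ^ n * r \<le> R"
  shows "cap \<mu> p (ball x r) (ball x R)
     \<le> (\<Sum>j<n. ennreal ((2 / (real n * 2 ^ j * r)) powr p) * emeasure \<mu> (ball x (2 ^ Suc j * r)))"
proof -
  have sb: "sets borel \<subseteq> sets \<mu>" using mms unfolding mms_def by auto
  have ballm: "ball y c \<in> sets \<mu>" for y c using sb by auto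
  define c where "c k = (1 / real n) / (2 ^ k * r)" for k
  define a where "a k = (2::real) ^ Suc k * r" for k
  define d where "d j = (2 * c j) powr p" for j
  have cpos: "0 < c k" for k unfolding c_def using n r by auto
  have ws: "(\<Sum>k<n. 1 / real n) = 1" using n by simp
  have pars: "0 < 2 ^ k * r \<and> 0 \<le> 1 / real n \<and> r \<le> a k - 2 ^ k * r \<and> a k \<le> R" if "k < n" for k
  proof -
    have "(2::real) ^ Suc k * r \<le> 2 ^ n * r" using that r by (intro mult_right_mono power_increasing) auto
    hence "a k \<le> R" unfolding a_def using R by linarith
    moreover have "r \<le> 2 ^ k * r" using r by simp
    moreover have "a k = 2 * (2 ^ k * r)" unfolding a_def by simp
    ultimately show ?thesis using r by auto
  qed
  have amono: "a k \<le> a k'" if "k \<le> k'" for k k'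
    unfolding a_def using r that by (intro mult_right_mono power_increasing) auto
  define G where "G y = (\<Sum>k<n. (1 / real n / (2 ^ k * r)) * indicator (ball x (a k)) y)" for y
  have cap1: "cap \<mu> p (ball x r) (ball x R) \<le> (\<integral>\<^sup>+y. ennreal (G y powr p) \<partial>\<mu>)"
    unfolding G_def by (rule cap_generic[OF mms p ws pars])
  have pw: "G y powr p \<le> (\<Sum>j<n. d j * indicator (ball x (a j)) y)" for y
  proof (cases "\<exists>k<n. y \<in> ball x (a k)")
    case False
    hence "G y = 0" unfolding G_def by (auto intro!: sum.neutral)
    thus ?thesis unfolding d_def by (auto intro!: sum_nonneg)
  next
    case True
    define j where "j = (LEAST k. k < n \<and> y \<in> ball x (a k))"
    have j: "j < n" "y \<in> ball x (a j)" unfolding j_def using LeastI_ex[OF True] by auto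
    have notin: "y \<notin> ball x (a k)" if "k < j" for k
      using not_less_Least[OF that[unfolded j_def]] that j by auto
    have inb: "y \<in> ball x (a k)" if "j \<le> k" for k using amono[OF that] j by auto
    have "G y = (\<Sum>k\<in>{j..<n}. c k)"
    proof -
      have "G y = (\<Sum>k<n. c k * indicator (ball x (a k)) y)" unfolding G_def c_def by simp
      also have "\<dots> = (\<Sum>k\<in>{j..<n}. c k * indicator (ball x (a k)) y)"
        by (rule sum.mono_neutral_right) (use notin j in auto)
      also have "\<dots> = (\<Sum>k\<in>{j..<n}. c k)" by (rule sum.cong) (use inb in auto)
      finally show ?thesis .
    qed
    also have "\<dots> = (1 / real n / r) * (\<Sum>k\<in>{j..<n}. (1/2) ^ k)"
      unfolding c_def by (simp add: sum_distrib_left power_one_over field_simps)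
    also have "\<dots> \<le> (1 / real n / r) * (2 * (1/2) ^ j)"
      using geom_half[of j n] j r by (intro mult_left_mono) auto
    also have "\<dots> = 2 * c j" unfolding c_def by (simp add: power_one_over field_simps)
    finally have "G y \<le> 2 * c j" .
    moreover have "0 \<le> G y" unfolding G_def using r by (auto intro!: sum_nonneg)
    ultimately have "G y powr p \<le> d j" unfolding d_def using p by (intro powr_mono2) auto
    also have "\<dots> = d j * indicator (ball x (a j)) y" using j by simp
    also have "\<dots> \<le> (\<Sum>j<n. d j * indicator (ball x (a j)) y)"
      by (rule member_le_sum) (use j in \<open>auto simp: d_def\<close>)
    finally show ?thesis .
  qed
  have "(\<integral>\<^sup>+y. ennreal (G y powr p) \<partial>\<mu>) \<le> (\<integral>\<^sup>+y. (\<Sum>j<n. ennreal (d j) * indicator (ball x (a j)) y) \<partial>\<mu>)"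
  proof (rule nn_integral_mono)
    fix y
    have "ennreal (G y powr p) \<le> ennreal (\<Sum>j<n. d j * indicator (ball x (a j)) y)"
      by (rule ennreal_leI[OF pw])
    also have "\<dots> = (\<Sum>j<n. ennreal (d j * indicator (ball x (a j)) y))"
      by (rule sum_ennreal[symmetric]) (auto simp: d_def)
    also have "\<dots> = (\<Sum>j<n. ennreal (d j) * indicator (ball x (a j)) y)"
      by (rule sum.cong) (auto simp: indicator_def)
    finally show "ennreal (G y powr p) \<le> (\<Sum>j<n. ennreal (d j) * indicator (ball x (a j)) y)" .
  qed
  also have "\<dots> = (\<Sum>j<n. \<integral>\<^sup>+y. ennreal (d j) * indicator (ball x (a j)) y \<partial>\<mu>)"
    by (rule nn_integral_sum) (use ballm in auto)
  also have "\<dots> = (\<Sum>j<n. ennreal (d j) * emeasure \<mu> (ball x (a j)))"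
    by (rule sum.cong) (use ballm in \<open>auto intro: nn_integral_cmult_indicator\<close>)
  also have "\<dots> = (\<Sum>j<n. ennreal ((2 / (real n * 2 ^ j * r)) powr p) * emeasure \<mu> (ball x (2 ^ Suc j * r)))"
    by (rule sum.cong) (auto simp: d_def c_def a_def field_simps)
  finally show ?thesis using cap1 by (rule order_trans[rotated])
qed

lemma em_eq:
  assumes "mms \<mu>" "0 < s"
  shows "emeasure \<mu> (ball x s) = ennreal (measure \<mu> (ball x s))"
proof -
  have "\<forall>x r. 0 < r \<longrightarrow> 0 < emeasure \<mu> (ball x r) \<and> emeasure \<mu> (ball x r) < \<infinity>"
    using assms(1) unfolding mms_def by simp
  hence "emeasure \<mu> (ball x s) < top" using assms(2) by simp
  thus ?thesis by (intro emeasure_eq_ennreal_measure) auto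
qed

lemma A1:
  fixes \<mu> :: "'a::metric_space measure" and x :: 'a
  assumes mms: "mms \<mu>" and p: "1 \<le> p" and r: "0 < r" "2 * r \<le> R"
    and K: "measure \<mu> (ball x R) \<le> K * R powr q"
  shows "cap \<mu> p (ball x r) (ball x R) \<le> ennreal (2 powr p * K * R powr (q - p))"
proof -
  have R: "0 < R" using r by simp
  have "cap \<mu> p (ball x r) (ball x R) \<le> ennreal ((1 / (R - r)) powr p) * emeasure \<mu> (ball x R)"
    by (rule cap_single[OF mms p]) (use r in auto)
  also have "\<dots> = ennreal ((1 / (R - r)) powr p * measure \<mu> (ball x R))"
    by (simp add: em_eq[OF mms R] ennreal_mult)
  also have "\<dots> \<le> ennreal (2 powr p * K * R powr (q - p))"
  proof (rule ennreal_leI)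
    have "(1 / (R - r)) powr p \<le> (2 / R) powr p"
      using r p by (intro powr_mono2) (auto simp: field_simps)
    hence "(1 / (R - r)) powr p * measure \<mu> (ball x R) \<le> (2 / R) powr p * (K * R powr q)"
      using K by (intro mult_mono) auto
    also have "\<dots> = 2 powr p * K * R powr (q - p)"
      using R by (simp add: powr_divide powr_diff field_simps)
    finally show "(1 / (R - r)) powr p * measure \<mu> (ball x R) \<le> 2 powr p * K * R powr (q - p)" .
  qed
  finally show ?thesis .
qed

lemma A2:
  fixes \<mu> :: "'a::metric_space measure" and x :: 'a
  assumes mms: "mms \<mu>" and p: "1 \<le> p" and r: "0 < r" "2 * r \<le> R"
    and K: "measure \<mu> (ball x (2 * r)) \<le> K * (2 * r) powr q"
  shows "cap \<mu> p (ball x r) (ball x R) \<le> ennreal (2 powr q * K * r powr (q - p))"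
proof -
  have r2: "0 < 2 * r" using r by simp
  have "cap \<mu> p (ball x r) (ball x R) \<le> ennreal ((1 / r) powr p) * emeasure \<mu> (ball x (2 * r))"
    by (rule cap_single[OF mms p]) (use r in auto)
  also have "\<dots> = ennreal ((1 / r) powr p * measure \<mu> (ball x (2 * r)))"
    by (simp add: em_eq[OF mms r2] ennreal_mult)
  also have "\<dots> \<le> ennreal (2 powr q * K * r powr (q - p))"
  proof (rule ennreal_leI)
    have "(1 / r) powr p * measure \<mu> (ball x (2 * r)) \<le> (1 / r) powr p * (K * (2 * r) powr q)"
      using K by (intro mult_left_mono) auto
    also have "\<dots> = 2 powr q * K * r powr (q - p)"
      using r by (simp add: powr_divide powr_diff powr_mult field_simps)
    finally show "(1 / r) powr p * measure \<mu> (ball x (2 * r)) \<le> 2 powr q * K * r powr (q - p)" .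
  qed
  finally show ?thesis .
qed

lemma A3:
  fixes \<mu> :: "'a::metric_space measure" and x :: 'a
  assumes mms: "mms \<mu>" and p: "1 \<le> p" and r: "0 < r" "2 * r \<le> R"
    and K: "\<And>s. r < s \<Longrightarrow> s \<le> R \<Longrightarrow> measure \<mu> (ball x s) \<le> K * s powr p" and K0: "0 \<le> K"
  shows "cap \<mu> p (ball x r) (ball x R) \<le> ennreal (K * 4 powr p * 2 powr (p - 1) * ln (R / r) powr (1 - p))"
proof -
  define L where "L = log 2 (R / r)"
  have Rr: "2 \<le> R / r" using r by (simp add: field_simps)
  have L1: "1 \<le> L" unfolding L_def using Rr by (subst le_log_iff) auto
  have pL: "2 powr L = R / r" unfolding L_def using Rr by simp
  define n where "n = nat \<lfloor>L\<rfloor>"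
  have fl: "of_int \<lfloor>L\<rfloor> \<le> L" "L < of_int \<lfloor>L\<rfloor> + 1" by linarith+
  have g: "1 \<le> \<lfloor>L\<rfloor>" using L1 by linarith
  hence e: "real n = of_int \<lfloor>L\<rfloor>" unfolding n_def by simp
  have nL: "real n \<le> L" "L < real n + 1" using fl e by auto
  have n1: "1 \<le> n" using g unfolding n_def by linarith
  have "(2::real) ^ n = 2 powr real n" by (simp add: powr_realpow)
  also have "\<dots> \<le> 2 powr L" using nL by (intro powr_mono) auto
  finally have "(2::real) ^ n * r \<le> R" using pL r by (simp add: field_simps)
  hence cap1: "cap \<mu> p (ball x r) (ball x R)
     \<le> (\<Sum>j<n. ennreal ((2 / (real n * 2 ^ j * r)) powr p) * emeasure \<mu> (ball x (2 ^ Suc j * r)))"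
    using cap_dyadic[OF mms p n1 r(1)] by blast
  have tm: "ennreal ((2 / (real n * 2 ^ j * r)) powr p) * emeasure \<mu> (ball x (2 ^ Suc j * r))
      \<le> ennreal (K * (4 / real n) powr p)" if j: "j < n" for j
  proof -
    have s0: "0 < (2::real) ^ Suc j * r" using r by simp
    have "(2::real) ^ Suc j \<le> 2 ^ n" using j by (intro power_increasing) auto
    hence sR: "(2::real) ^ Suc j * r \<le> R" using \<open>2 ^ n * r \<le> R\<close> r
      by (meson mult_right_mono less_imp_le order_trans)
    have "(2::real) ^ 1 \<le> 2 ^ Suc j" by (rule power_increasing) auto
    hence "2 * r \<le> 2 ^ Suc j * r" using r by (intro mult_right_mono) auto
    hence sr: "r < 2 ^ Suc j * r" using r by linarith
    have "ennreal ((2 / (real n * 2 ^ j * r)) powr p) * emeasure \<mu> (ball x (2 ^ Suc j * r))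
        = ennreal ((2 / (real n * 2 ^ j * r)) powr p * measure \<mu> (ball x (2 ^ Suc j * r)))"
      by (subst em_eq[OF mms s0]) (simp add: ennreal_mult del: power_Suc)
    also have "\<dots> \<le> ennreal ((2 / (real n * 2 ^ j * r)) powr p * (K * (2 ^ Suc j * r) powr p))"
      by (intro ennreal_leI mult_left_mono K sr sR) auto
    also have "(2 / (real n * 2 ^ j * r)) powr p * (K * (2 ^ Suc j * r) powr p)
        = K * ((2 / (real n * 2 ^ j * r)) * (2 ^ Suc j * r)) powr p"
    proof -
      have "(2 / (real n * 2 ^ j * r)) powr p * (2 ^ Suc j * r) powr p
          = ((2 / (real n * 2 ^ j * r)) * (2 ^ Suc j * r)) powr p"
        by (rule powr_mult[symmetric])
      thus ?thesis by (simp only: mult.left_commute[of _ K])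
    qed
    also have "(2 / (real n * 2 ^ j * r)) * (2 ^ Suc j * r) = 4 / real n"
      using r n1 by (simp add: field_simps)
    finally show ?thesis .
  qed
  have "(\<Sum>j<n. ennreal ((2 / (real n * 2 ^ j * r)) powr p) * emeasure \<mu> (ball x (2 ^ Suc j * r)))
      \<le> (\<Sum>j<n. ennreal (K * (4 / real n) powr p))"
    by (rule sum_mono) (use tm in auto)
  also have "\<dots> = ennreal (real n * (K * (4 / real n) powr p))"
    using K0 by (simp add: ennreal_mult ennreal_of_nat_eq_real_of_nat)
  also have "\<dots> \<le> ennreal (K * 4 powr p * 2 powr (p - 1) * ln (R / r) powr (1 - p))"
  proof (rule ennreal_leI)
    have npos: "0 < real n" using n1 by simp
    have e1: "real n * (K * (4 / real n) powr p) = K * 4 powr p * real n powr (1 - p)"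
      using npos by (simp add: powr_divide powr_diff field_simps)
    have "ln (R / r) = L * ln 2" unfolding L_def log_def by simp
    also have "\<dots> \<le> L * 1" using L1 ln_2_less_1 by (intro mult_left_mono) auto
    finally have ln_le: "ln (R / r) / 2 \<le> real n" using nL n1 by simp
    have lnpos: "0 < ln (R / r) / 2" using Rr by simp
    have "real n powr (1 - p) \<le> (ln (R / r) / 2) powr (1 - p)"
      by (rule powr_mono2') (use p lnpos ln_le in auto)
    hence i1: "K * 4 powr p * real n powr (1 - p) \<le> K * 4 powr p * (ln (R / r) / 2) powr (1 - p)"
      by (rule mult_left_mono) (use K0 in simp)
    have e2: "(ln (R / r) / 2) powr (1 - p) = 2 powr (p - 1) * ln (R / r) powr (1 - p)"
      using Rr by (simp add: powr_divide powr_diff field_simps)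
    show "real n * (K * (4 / real n) powr p) \<le> K * 4 powr p * 2 powr (p - 1) * ln (R / r) powr (1 - p)"
    proof -
      have "K * 4 powr p * (ln (R / r) / 2) powr (1 - p) = K * 4 powr p * 2 powr (p - 1) * ln (R / r) powr (1 - p)"
        unfolding e2 by (simp only: mult.assoc)
      thus ?thesis using e1 i1 by linarith
    qed
  qed
  finally have X: "(\<Sum>j<n. ennreal ((2 / (real n * 2 ^ j * r)) powr p) * emeasure \<mu> (ball x (2 ^ Suc j * r)))
      \<le> ennreal (K * 4 powr p * 2 powr (p - 1) * ln (R / r) powr (1 - p))" .
  show ?thesis by (rule order_trans[OF cap1 X])
qed

lemma ball_measure_mono:
  assumes mms: "mms \<mu>" and s: "0 < s" "s \<le> s'"
  shows "measure \<mu> (ball x s) \<le> measure \<mu> (ball x s')"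
proof -
  have sb: "sets borel \<subseteq> sets \<mu>" using mms unfolding mms_def by auto
  have "\<forall>x r. 0 < r \<longrightarrow> 0 < emeasure \<mu> (ball x r) \<and> emeasure \<mu> (ball x r) < \<infinity>"
    using mms unfolding mms_def by simp
  hence "emeasure \<mu> (ball x s') < \<infinity>" using s by simp
  hence f: "ball x s' \<in> fmeasurable \<mu>" using sb unfolding fmeasurable_def by auto
  show ?thesis by (rule measure_mono_fmeasurable[OF _ _ f]) (use s sb in auto)
qed

lemma M1:
  assumes mms: "mms \<mu>" and q: "q \<in> lower_S0 \<mu> x" and R0: "0 < R0"
  shows "\<exists>K\<ge>0. \<forall>s. 0 < s \<and> s \<le> R0 \<longrightarrow> measure \<mu> (ball x s) \<le> K * s powr q"
proof -
  obtain C where C: "\<And>r. 0 < r \<and> r \<le> 1 \<Longrightarrow> measure \<mu> (ball x r) \<le> C * r powr q"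
    using q unfolding lower_S0_def by auto
  have q0: "0 < q" using q unfolding lower_S0_def by auto
  define M where "M = measure \<mu> (ball x R0)"
  have M0: "0 \<le> M" unfolding M_def by simp
  define K where "K = max 0 C + M"
  have "measure \<mu> (ball x s) \<le> K * s powr q" if s: "0 < s" "s \<le> R0" for s
  proof (cases "s \<le> 1")
    case True
    have "measure \<mu> (ball x s) \<le> C * s powr q" using C s True by auto
    also have "\<dots> \<le> K * s powr q" unfolding K_def using M0 by (intro mult_right_mono) auto
    finally show ?thesis .
  next
    case False
    have "measure \<mu> (ball x s) \<le> M" unfolding M_def by (rule ball_measure_mono[OF mms s])
    also have "\<dots> \<le> K * 1" unfolding K_def by simp
    also have "\<dots> \<le> K * s powr q" using False q0 M0 unfolding K_def
      by (intro mult_left_mono) (auto simp: ge_one_powr_ge_zero)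
    finally show ?thesis .
  qed
  moreover have "0 \<le> K" unfolding K_def using M0 by simp
  ultimately show ?thesis by blast
qed

lemma M2:
  assumes mms: "mms \<mu>" and q: "q \<in> upper_Sinf \<mu> x" and t: "0 < t"
  shows "\<exists>K\<ge>0. \<forall>s. t \<le> s \<longrightarrow> measure \<mu> (ball x s) \<le> K * s powr q"
proof -
  obtain C where C: "\<And>r. 1 \<le> r \<Longrightarrow> measure \<mu> (ball x r) \<le> C * r powr q"
    using q unfolding upper_Sinf_def by auto
  have q0: "0 < q" using q unfolding upper_Sinf_def by auto
  define M where "M = measure \<mu> (ball x 1) / t powr q"
  have M0: "0 \<le> M" unfolding M_def by simp
  define K where "K = max 0 C + M"
  have "measure \<mu> (ball x s) \<le> K * s powr q" if s: "t \<le> s" for s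
  proof (cases "1 \<le> s")
    case True
    have "measure \<mu> (ball x s) \<le> C * s powr q" using C True by auto
    also have "\<dots> \<le> K * s powr q" unfolding K_def using M0 by (intro mult_right_mono) auto
    finally show ?thesis .
  next
    case False
    have "measure \<mu> (ball x s) \<le> measure \<mu> (ball x 1)"
      by (rule ball_measure_mono[OF mms]) (use s t False in auto)
    also have "\<dots> = M * t powr q" unfolding M_def using t by simp
    also have "\<dots> \<le> M * s powr q" using s t q0 M0 by (intro mult_left_mono powr_mono2) auto
    also have "\<dots> \<le> K * s powr q" unfolding K_def by (intro mult_right_mono) auto
    finally show ?thesis .
  qed
  moreover have "0 \<le> K" unfolding K_def using M0 by simp
  ultimately show ?thesis by blast
qed

theorem proposition8p1:
  fixes \<mu> :: "'a::metric_space measure" and p R\<^sub>0 :: real and x :: 'a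
  assumes "mms \<mu>" and "1 \<le> p" and "doubling_at \<mu> x" and "0 < R\<^sub>0"
  shows
   "(\<forall>q. q \<in> lower_S0 \<mu> x \<longrightarrow>
      (q < p \<longrightarrow> (\<exists>C. \<forall>r R. 0 < 2 * r \<and> 2 * r \<le> R \<and> R \<le> R\<^sub>0 \<longrightarrow>
          cap \<mu> p (ball x r) (ball x R) \<le> ennreal (C * R powr (q - p)))) \<and>
      (p < q \<longrightarrow> (\<exists>C. \<forall>r R. 0 < 2 * r \<and> 2 * r \<le> R \<and> R \<le> R\<^sub>0 \<longrightarrow>
          cap \<mu> p (ball x r) (ball x R) \<le> ennreal (C * r powr (q - p))))) \<and>
    (\<not> bounded (UNIV :: 'a set) \<longrightarrow> (\<forall>q. q \<in> upper_Sinf \<mu> x \<longrightarrow>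
      (q < p \<longrightarrow> (\<exists>C. \<forall>r R. R\<^sub>0 \<le> r \<and> r \<le> R / 2 \<longrightarrow>
          cap \<mu> p (ball x r) (ball x R) \<le> ennreal (C * R powr (q - p)))) \<and>
      (p < q \<longrightarrow> (\<exists>C. \<forall>r R. R\<^sub>0 \<le> r \<and> r \<le> R / 2 \<longrightarrow>
          cap \<mu> p (ball x r) (ball x R) \<le> ennreal (C * r powr (q - p)))))) \<and>
    (p \<in> lower_S0 \<mu> x \<longrightarrow> (\<exists>C. \<forall>r R. 0 < 2 * r \<and> 2 * r \<le> R \<and> R \<le> R\<^sub>0 \<longrightarrow>
          cap \<mu> p (ball x r) (ball x R) \<le> ennreal (C * ln (R / r) powr (1 - p)))) \<and>
    (\<not> bounded (UNIV :: 'a set) \<longrightarrow> p \<in> upper_Sinf \<mu> x \<longrightarrow>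
       (\<exists>C. \<forall>r R. R\<^sub>0 \<le> r \<and> r \<le> R / 2 \<longrightarrow>
          cap \<mu> p (ball x r) (ball x R) \<le> ennreal (C * ln (R / r) powr (1 - p))))"
proof (intro conjI allI impI)
  note mms = assms(1) and p = assms(2) and R0 = assms(4)
  fix q assume q: "q \<in> lower_S0 \<mu> x"
  obtain K where K0: "0 \<le> K" and K: "\<And>s. 0 < s \<Longrightarrow> s \<le> R\<^sub>0 \<Longrightarrow> measure \<mu> (ball x s) \<le> K * s powr q"
    using M1[OF mms q R0] by blast
  {
    assume "q < p"
    show "\<exists>C. \<forall>r R. 0 < 2 * r \<and> 2 * r \<le> R \<and> R \<le> R\<^sub>0 \<longrightarrow>
          cap \<mu> p (ball x r) (ball x R) \<le> ennreal (C * R powr (q - p))"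
    proof (intro exI allI impI)
      fix r R assume h: "0 < 2 * r \<and> 2 * r \<le> R \<and> R \<le> R\<^sub>0"
      show "cap \<mu> p (ball x r) (ball x R) \<le> ennreal (2 powr p * K * R powr (q - p))"
        by (rule A1[OF mms p]) (use h K in auto)
    qed
  next
    assume "p < q"
    show "\<exists>C. \<forall>r R. 0 < 2 * r \<and> 2 * r \<le> R \<and> R \<le> R\<^sub>0 \<longrightarrow>
          cap \<mu> p (ball x r) (ball x R) \<le> ennreal (C * r powr (q - p))"
    proof (intro exI allI impI)
      fix r R assume h: "0 < 2 * r \<and> 2 * r \<le> R \<and> R \<le> R\<^sub>0"
      show "cap \<mu> p (ball x r) (ball x R) \<le> ennreal (2 powr q * K * r powr (q - p))"
        by (rule A2[OF mms p]) (use h K in auto)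
    qed
  }
next
  note mms = assms(1) and p = assms(2) and R0 = assms(4)
  fix q assume q: "q \<in> upper_Sinf \<mu> x"
  obtain K where K0: "0 \<le> K" and K: "\<And>s. R\<^sub>0 \<le> s \<Longrightarrow> measure \<mu> (ball x s) \<le> K * s powr q"
    using M2[OF mms q R0] by blast
  {
    assume "q < p"
    show "\<exists>C. \<forall>r R. R\<^sub>0 \<le> r \<and> r \<le> R / 2 \<longrightarrow>
          cap \<mu> p (ball x r) (ball x R) \<le> ennreal (C * R powr (q - p))"
    proof (intro exI allI impI)
      fix r R assume h: "R\<^sub>0 \<le> r \<and> r \<le> R / 2"
      show "cap \<mu> p (ball x r) (ball x R) \<le> ennreal (2 powr p * K * R powr (q - p))"
        by (rule A1[OF mms p]) (use h K R0 in auto)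
    qed
  next
    assume "p < q"
    show "\<exists>C. \<forall>r R. R\<^sub>0 \<le> r \<and> r \<le> R / 2 \<longrightarrow>
          cap \<mu> p (ball x r) (ball x R) \<le> ennreal (C * r powr (q - p))"
    proof (intro exI allI impI)
      fix r R assume h: "R\<^sub>0 \<le> r \<and> r \<le> R / 2"
      show "cap \<mu> p (ball x r) (ball x R) \<le> ennreal (2 powr q * K * r powr (q - p))"
        by (rule A2[OF mms p]) (use h K R0 in auto)
    qed
  }
next
  note mms = assms(1) and p = assms(2) and R0 = assms(4)
  assume q: "p \<in> lower_S0 \<mu> x"
  obtain K where K0: "0 \<le> K" and K: "\<And>s. 0 < s \<Longrightarrow> s \<le> R\<^sub>0 \<Longrightarrow> measure \<mu> (ball x s) \<le> K * s powr p"
    using M1[OF mms q R0] by blast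
  show "\<exists>C. \<forall>r R. 0 < 2 * r \<and> 2 * r \<le> R \<and> R \<le> R\<^sub>0 \<longrightarrow>
          cap \<mu> p (ball x r) (ball x R) \<le> ennreal (C * ln (R / r) powr (1 - p))"
  proof (intro exI allI impI)
    fix r R assume h: "0 < 2 * r \<and> 2 * r \<le> R \<and> R \<le> R\<^sub>0"
    show "cap \<mu> p (ball x r) (ball x R) \<le> ennreal (K * 4 powr p * 2 powr (p - 1) * ln (R / r) powr (1 - p))"
      by (rule A3[OF mms p _ _ _ K0]) (use h K in auto)
  qed
next
  note mms = assms(1) and p = assms(2) and R0 = assms(4)
  assume q: "p \<in> upper_Sinf \<mu> x"
  obtain K where K0: "0 \<le> K" and K: "\<And>s. R\<^sub>0 \<le> s \<Longrightarrow> measure \<mu> (ball x s) \<le> K * s powr p"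
    using M2[OF mms q R0] by blast
  show "\<exists>C. \<forall>r R. R\<^sub>0 \<le> r \<and> r \<le> R / 2 \<longrightarrow>
          cap \<mu> p (ball x r) (ball x R) \<le> ennreal (C * ln (R / r) powr (1 - p))"
  proof (intro exI allI impI)
    fix r R assume h: "R\<^sub>0 \<le> r \<and> r \<le> R / 2"
    show "cap \<mu> p (ball x r) (ball x R) \<le> ennreal (K * 4 powr p * 2 powr (p - 1) * ln (R / r) powr (1 - p))"
      by (rule A3[OF mms p _ _ _ K0]) (use h K R0 in auto)
  qed
qed

end
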